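(* Let $G=(N,E,W)$ be a finite undirected graph with positive edge weights $W=\{w_e : e\in E\}$, let $x,y\in N$ with $xy\notin E$, and let $G^*=(N,E^*,W^* )$ with $E^*=E\cup\{xy\}$ and $W^*=W\cup\{w_{x,y}\}$ for some weight $w_{x,y}>0$. Let $d$ and $d^*$ be the hop distances of $G$ and $G^*$, let $\mu_a,\mu^*_a$ be the neighbor measures and $k,k^*$ the Ollivier-Ricci curvatures of $G$ and $G^*$ (defined in the context). Then for any nodes $a\neq b$ in $N$, $$k^*(a,b)-k(a,b)\le \frac{W_1^{d}(\mu_a,\mu_b)-W_1^{d^*}(\mu^*_a,\mu^*_b)}{d^*(a,b)}.$$ Moreover, if $a,b\notin\{x,y\}$ and there exists a coupling $\pi^*$ attaining the minimum in $W_1^{d^*}(\mu^*_a,\mu^*_b)$, then $$k^*(a,b)-k(a,b)\le \frac{\|d-d^*\|_{\infty,N}}{d^*(a,b)},\qquad\text{where }\ \|d-d^*\|_{\infty,N}=\max_{(u,v)\in N^2}|d(u,v)-d^*(u,v)|.$$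
   Context: The graph $G$ is assumed connected, so all hop distances are finite. The hop distance $d(u,v)$ in a graph is the minimum number of edges on a path from $u$ to $v$ (weights are ignored). For a node $a$, $N_a$ denotes its set of neighbors in $G$ and $N^*_a$ its set of neighbors in $G^*$. The neighbor measures are the probability measures on $N$ given by $\mu_a(v)=\frac{w_{a,v}}{\sum_{c\in N_a} w_{a,c}}$ for $v\in N_a$ (and $0$ otherwise), and $\mu^*_a(v)=\frac{w^*_{a,v}}{\sum_{c\in N^*_a} w^*_{a,c}}$ for $v\in N^*_a$ (and $0$ otherwise). For a metric $\delta$ on $N$ and probability measures $\mu,\nu$ on $N$, the Wasserstein distance is $W_1^{\delta}(\mu,\nu)=\inf_{\gamma}\sum_{i,j\in N}\delta(i,j)\gamma_{i,j}$, the infimum over couplings $\gamma$ (nonnegative matrices with row marginals $\mu$ and column marginals $\nu$). The Ollivier-Ricci curvature of a pair $a\neq b$ is $k(a,b)=1-\frac{W_1^{d}(\mu_a,\mu_b)}{d(a,b)}$ in $G$ and $k^*(a,b)=1-\frac{W_1^{d^*}(\mu^*_a,\mu^*_b)}{d^*(a,b)}$ in $G^*$. *)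

theory Defs
  imports Complex_Main
begin

definition wgraph :: "'a set \<Rightarrow> ('a \<times> 'a) set \<Rightarrow> ('a \<Rightarrow> 'a \<Rightarrow> real) \<Rightarrow> bool" where
  "wgraph N E w \<longleftrightarrow> finite N \<and> E \<subseteq> N \<times> N \<and> (\<forall>u v. (u,v) \<in> E \<longrightarrow> (v,u) \<in> E)
     \<and> (\<forall>u. (u,u) \<notin> E) \<and> (\<forall>u v. (u,v) \<in> E \<longrightarrow> w u v > 0 \<and> w u v = w v u)"

definition is_walk :: "('a \<times> 'a) set \<Rightarrow> 'a list \<Rightarrow> 'a \<Rightarrow> 'a \<Rightarrow> bool" where
  "is_walk E p u v \<longleftrightarrow> p \<noteq> [] \<and> hd p = u \<and> last p = v \<and>
     (\<forall>i. Suc i < length p \<longrightarrow> (p ! i, p ! Suc i) \<in> E)"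

definition connected_graph :: "'a set \<Rightarrow> ('a \<times> 'a) set \<Rightarrow> bool" where
  "connected_graph N E \<longleftrightarrow> (\<forall>u\<in>N. \<forall>v\<in>N. \<exists>p. is_walk E p u v)"

definition hop_dist :: "('a \<times> 'a) set \<Rightarrow> 'a \<Rightarrow> 'a \<Rightarrow> real" where
  "hop_dist E u v = real (LEAST n. \<exists>p. is_walk E p u v \<and> length p = Suc n)"

definition nbrs :: "('a \<times> 'a) set \<Rightarrow> 'a \<Rightarrow> 'a set" where
  "nbrs E a = {c. (a,c) \<in> E}"

definition nbr_measure :: "('a \<times> 'a) set \<Rightarrow> ('a \<Rightarrow> 'a \<Rightarrow> real) \<Rightarrow> 'a \<Rightarrow> 'a \<Rightarrow> real" where
  "nbr_measure E w a v = (if v \<in> nbrs E a then w a v / (\<Sum>c\<in>nbrs E a. w a c) else 0)"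

definition coupling :: "'a set \<Rightarrow> ('a \<Rightarrow> real) \<Rightarrow> ('a \<Rightarrow> real) \<Rightarrow> ('a \<Rightarrow> 'a \<Rightarrow> real) \<Rightarrow> bool" where
  "coupling N \<mu> \<nu> \<gamma> \<longleftrightarrow> (\<forall>i\<in>N. \<forall>j\<in>N. \<gamma> i j \<ge> 0)
     \<and> (\<forall>i\<in>N. (\<Sum>j\<in>N. \<gamma> i j) = \<mu> i) \<and> (\<forall>j\<in>N. (\<Sum>i\<in>N. \<gamma> i j) = \<nu> j)"

definition transport_cost :: "'a set \<Rightarrow> ('a \<Rightarrow> 'a \<Rightarrow> real) \<Rightarrow> ('a \<Rightarrow> 'a \<Rightarrow> real) \<Rightarrow> real" where
  "transport_cost N \<delta> \<gamma> = (\<Sum>i\<in>N. \<Sum>j\<in>N. \<delta> i j * \<gamma> i j)"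

definition wasserstein :: "'a set \<Rightarrow> ('a \<Rightarrow> 'a \<Rightarrow> real) \<Rightarrow> ('a \<Rightarrow> real) \<Rightarrow> ('a \<Rightarrow> real) \<Rightarrow> real" where
  "wasserstein N \<delta> \<mu> \<nu> = Inf {transport_cost N \<delta> \<gamma> | \<gamma>. coupling N \<mu> \<nu> \<gamma>}"

definition ricci :: "'a set \<Rightarrow> ('a \<times> 'a) set \<Rightarrow> ('a \<Rightarrow> 'a \<Rightarrow> real) \<Rightarrow> 'a \<Rightarrow> 'a \<Rightarrow> real" where
  "ricci N E w a b = 1 - wasserstein N (hop_dist E) (nbr_measure E w a) (nbr_measure E w b) / hop_dist E a b"

end

theory Submission
  imports Defs
begin

lemma walk_mono: "is_walk E p u v \<Longrightarrow> E \<subseteq> E' \<Longrightarrow> is_walk E' p u v"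
  unfolding is_walk_def by blast

lemma hop_le:
  assumes "is_walk E p u v" "E \<subseteq> E'"
  shows "hop_dist E' u v \<le> hop_dist E u v"
proof -
  have ex: "\<exists>n. \<exists>p. is_walk E p u v \<and> length p = Suc n"
  proof -
    have "p \<noteq> []" using assms(1) unfolding is_walk_def by simp
    then have "length p = Suc (length p - 1)" by simp
    then show ?thesis using assms(1) by blast
  qed
  from LeastI_ex[OF ex] obtain q where q: "is_walk E q u v"
    "length q = Suc (LEAST n. \<exists>p. is_walk E p u v \<and> length p = Suc n)" by blast
  have "(LEAST n. \<exists>p. is_walk E' p u v \<and> length p = Suc n)
        \<le> (LEAST n. \<exists>p. is_walk E p u v \<and> length p = Suc n)"
    by (rule Least_le) (use q walk_mono[OF q(1) assms(2)] in blast)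
  then show ?thesis unfolding hop_dist_def by simp
qed

lemma hop_pos:
  assumes "is_walk E p u v" "u \<noteq> v"
  shows "hop_dist E u v \<ge> 1"
proof -
  have ex: "\<exists>n. \<exists>p. is_walk E p u v \<and> length p = Suc n"
  proof -
    have "p \<noteq> []" using assms(1) unfolding is_walk_def by simp
    then have "length p = Suc (length p - 1)" by simp
    then show ?thesis using assms(1) by blast
  qed
  from LeastI_ex[OF ex] obtain q where q: "is_walk E q u v"
    "length q = Suc (LEAST n. \<exists>p. is_walk E p u v \<and> length p = Suc n)" by blast
  have "(LEAST n. \<exists>p. is_walk E p u v \<and> length p = Suc n) \<noteq> 0"
  proof
    assume "(LEAST n. \<exists>p. is_walk E p u v \<and> length p = Suc n) = 0"
    with q(2) obtain z where "q = [z]" by (cases q) auto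
    with q(1) assms(2) show False unfolding is_walk_def by auto
  qed
  then show ?thesis unfolding hop_dist_def by simp
qed

lemma nbr_measure_props:
  assumes G: "wgraph N E w" and ne: "nbrs E a \<noteq> {}"
  shows "\<forall>v. nbr_measure E w a v \<ge> 0" "(\<Sum>v\<in>N. nbr_measure E w a v) = 1"
proof -
  have fin: "finite N" and sub: "nbrs E a \<subseteq> N"
    using G unfolding wgraph_def nbrs_def by auto
  have finn: "finite (nbrs E a)" using fin sub finite_subset by blast
  have pos: "\<And>c. c \<in> nbrs E a \<Longrightarrow> w a c > 0" using G unfolding wgraph_def nbrs_def by auto
  have S: "(\<Sum>c\<in>nbrs E a. w a c) > 0"
    by (rule sum_pos[OF finn ne]) (use pos in auto)
  show "\<forall>v. nbr_measure E w a v \<ge> 0"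
    unfolding nbr_measure_def using pos S by (auto intro: less_imp_le)
  have "(\<Sum>v\<in>N. nbr_measure E w a v) = (\<Sum>v\<in>N \<inter> nbrs E a. w a v / (\<Sum>c\<in>nbrs E a. w a c))"
    unfolding nbr_measure_def by (simp add: sum.inter_restrict[OF fin, symmetric] if_distrib)
  also have "N \<inter> nbrs E a = nbrs E a" using sub by blast
  also have "(\<Sum>v\<in>nbrs E a. w a v / (\<Sum>c\<in>nbrs E a. w a c)) = 1"
    using S by (simp add: sum_divide_distrib[symmetric])
  finally show "(\<Sum>v\<in>N. nbr_measure E w a v) = 1" .
qed

lemma coupling_ex:
  assumes "\<forall>v. \<mu> v \<ge> 0" "\<forall>v. \<nu> v \<ge> 0" "(\<Sum>v\<in>N. \<mu> v) = 1" "(\<Sum>v\<in>N. \<nu> v) = 1"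
  shows "coupling N \<mu> \<nu> (\<lambda>i j. \<mu> i * \<nu> j)"
  unfolding coupling_def using assms
  by (simp add: sum_distrib_left[symmetric] sum_distrib_right[symmetric])

lemma cost_nonneg:
  assumes "\<forall>i j. \<delta> i j \<ge> 0" "coupling N \<mu> \<nu> \<gamma>"
  shows "transport_cost N \<delta> \<gamma> \<ge> 0"
  using assms unfolding transport_cost_def coupling_def
  by (intro sum_nonneg) auto

lemma wass_nonneg:
  assumes "\<forall>i j. \<delta> i j \<ge> 0" "coupling N \<mu> \<nu> \<gamma>"
  shows "wasserstein N \<delta> \<mu> \<nu> \<ge> 0"
  unfolding wasserstein_def
  by (rule cInf_greatest) (use assms cost_nonneg in auto)

lemma wass_le:
  assumes "\<forall>i j. \<delta> i j \<ge> 0" "coupling N \<mu> \<nu> \<gamma>"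
  shows "wasserstein N \<delta> \<mu> \<nu> \<le> transport_cost N \<delta> \<gamma>"
  unfolding wasserstein_def
proof (rule cInf_lower)
  show "bdd_below {transport_cost N \<delta> \<gamma> |\<gamma>. coupling N \<mu> \<nu> \<gamma>}"
    by (rule bdd_belowI[where m=0]) (use assms cost_nonneg in auto)
qed (use assms in auto)

theorem proposition1:
  fixes N :: "'a set" and E :: "('a \<times> 'a) set" and w :: "'a \<Rightarrow> 'a \<Rightarrow> real"
    and x y a b :: 'a and wxy :: real
  assumes G: "wgraph N E w" and conn: "connected_graph N E"
    and xy: "x \<in> N" "y \<in> N" "x \<noteq> y" "(x, y) \<notin> E" and wxy: "wxy > 0"
    and ab: "a \<in> N" "b \<in> N" "a \<noteq> b"
  defines "Es \<equiv> E \<union> {(x, y), (y, x)}"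
    and "ws \<equiv> (\<lambda>u v. if (u = x \<and> v = y) \<or> (u = y \<and> v = x) then wxy else w u v)"
  shows "ricci N Es ws a b - ricci N E w a b
           \<le> (wasserstein N (hop_dist E) (nbr_measure E w a) (nbr_measure E w b)
              - wasserstein N (hop_dist Es) (nbr_measure Es ws a) (nbr_measure Es ws b))
             / hop_dist Es a b
         \<and> (a \<notin> {x, y} \<longrightarrow> b \<notin> {x, y} \<longrightarrow>
         (\<exists>\<pi>. coupling N (nbr_measure Es ws a) (nbr_measure Es ws b) \<pi> \<and>
              transport_cost N (hop_dist Es) \<pi>
                = wasserstein N (hop_dist Es) (nbr_measure Es ws a) (nbr_measure Es ws b)) \<longrightarrow>
         ricci N Es ws a b - ricci N E w a b
           \<le> Max {\<bar>hop_dist E u v - hop_dist Es u v\<bar> | u v. u \<in> N \<and> v \<in> N} / hop_dist Es a b)"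
proof -
  have fin: "finite N" using G unfolding wgraph_def by auto
  have sub: "E \<subseteq> Es" unfolding Es_def by blast
  have symE: "\<And>u v. (u,v) \<in> E \<Longrightarrow> (v,u) \<in> E" using G unfolding wgraph_def by auto
  have walks: "\<And>u v. u \<in> N \<Longrightarrow> v \<in> N \<Longrightarrow> \<exists>p. is_walk E p u v"
    using conn unfolding connected_graph_def by auto
  have hle: "\<And>u v. u \<in> N \<Longrightarrow> v \<in> N \<Longrightarrow> hop_dist Es u v \<le> hop_dist E u v"
    using walks hop_le sub by metis
  obtain pab where pab: "is_walk E pab a b" using walks ab by blast
  have ds1: "hop_dist Es a b \<ge> 1" using hop_pos[OF walk_mono[OF pab sub] ab(3)] .
  have dle: "hop_dist Es a b \<le> hop_dist E a b" using hle ab by blast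
  have nb: "nbrs E u \<noteq> {}" if uv: "u \<in> N" "v \<in> N" "u \<noteq> v" for u v
  proof -
    obtain p where p: "is_walk E p u v" using walks uv by blast
    have "length p \<ge> 2"
    proof (rule ccontr)
      assume "\<not> length p \<ge> 2"
      with p obtain z where "p = [z]" unfolding is_walk_def
        by (cases p) (auto simp: Suc_le_eq)
      with p uv show False unfolding is_walk_def by (metis last_ConsL list.sel(1))
    qed
    then have "(p ! 0, p ! 1) \<in> E" using p unfolding is_walk_def by auto
    moreover have "p ! 0 = u" using p unfolding is_walk_def by (metis hd_conv_nth)
    ultimately show ?thesis unfolding nbrs_def by auto
  qed
  have nba: "nbrs E a \<noteq> {}" using nb ab by blast
  have nbb: "nbrs E b \<noteq> {}" using nb ab by metis
  note ma = nbr_measure_props[OF G nba] and mb = nbr_measure_props[OF G nbb]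
  have cpl: "coupling N (nbr_measure E w a) (nbr_measure E w b)
     (\<lambda>i j. nbr_measure E w a i * nbr_measure E w b j)"
    by (rule coupling_ex) (use ma mb in auto)
  have hnn: "\<forall>i j. hop_dist F i j \<ge> 0" for F :: "('a \<times> 'a) set" unfolding hop_dist_def by simp
  define W where "W = wasserstein N (hop_dist E) (nbr_measure E w a) (nbr_measure E w b)"
  define Ws where "Ws = wasserstein N (hop_dist Es) (nbr_measure Es ws a) (nbr_measure Es ws b)"
  define d where "d = hop_dist E a b"
  define ds where "ds = hop_dist Es a b"
  have W0: "W \<ge> 0" unfolding W_def using wass_nonneg[OF hnn cpl] .
  have dds: "ds \<le> d" "ds \<ge> 1" using dle ds1 unfolding d_def ds_def by auto
  have key: "ricci N Es ws a b - ricci N E w a b \<le> (W - Ws) / ds"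
  proof -
    have "ricci N Es ws a b - ricci N E w a b = W / d - Ws / ds"
      unfolding ricci_def W_def Ws_def d_def ds_def by simp
    also have "W / d \<le> W / ds" using W0 dds by (intro divide_left_mono) auto
    finally show ?thesis by (simp add: diff_divide_distrib)
  qed
  show ?thesis
  proof (intro conjI impI)
    show "ricci N Es ws a b - ricci N E w a b \<le> (wasserstein N (hop_dist E) (nbr_measure E w a) (nbr_measure E w b)
              - wasserstein N (hop_dist Es) (nbr_measure Es ws a) (nbr_measure Es ws b)) / hop_dist Es a b"
      using key unfolding W_def Ws_def ds_def .
  next
    assume anx: "a \<notin> {x, y}" and bnx: "b \<notin> {x, y}"
    assume "\<exists>\<pi>. coupling N (nbr_measure Es ws a) (nbr_measure Es ws b) \<pi> \<and>
              transport_cost N (hop_dist Es) \<pi>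
                = wasserstein N (hop_dist Es) (nbr_measure Es ws a) (nbr_measure Es ws b)"
    then obtain \<pi> where pc: "coupling N (nbr_measure Es ws a) (nbr_measure Es ws b) \<pi>"
      and pe: "transport_cost N (hop_dist Es) \<pi> = Ws" unfolding Ws_def by blast
    have same: "nbr_measure Es ws u = nbr_measure E w u" if "u \<notin> {x,y}" for u
    proof -
      have 1: "nbrs Es u = nbrs E u" using that unfolding Es_def nbrs_def by auto
      have 2: "ws u = w u" using that unfolding ws_def by auto
      show ?thesis unfolding nbr_measure_def 1 2 ..
    qed
    have pc': "coupling N (nbr_measure E w a) (nbr_measure E w b) \<pi>"
      using pc same[OF anx] same[OF bnx] by simp
    have WW: "W \<le> transport_cost N (hop_dist E) \<pi>" unfolding W_def by (rule wass_le[OF hnn pc'])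
    define M where "M = Max {\<bar>hop_dist E u v - hop_dist Es u v\<bar> | u v. u \<in> N \<and> v \<in> N}"
    have setq: "{\<bar>hop_dist E u v - hop_dist Es u v\<bar> | u v. u \<in> N \<and> v \<in> N}
       = (\<lambda>(u,v). \<bar>hop_dist E u v - hop_dist Es u v\<bar>) ` (N \<times> N)" by auto
    have Mge: "hop_dist E u v - hop_dist Es u v \<le> M" if "u \<in> N" "v \<in> N" for u v
    proof -
      have "\<bar>hop_dist E u v - hop_dist Es u v\<bar> \<le> M" unfolding M_def setq
        by (rule Max_ge) (use fin that in auto)
      then show ?thesis by simp
    qed
    have pnn: "\<forall>i\<in>N. \<forall>j\<in>N. \<pi> i j \<ge> 0" and rows: "\<forall>i\<in>N. (\<Sum>j\<in>N. \<pi> i j) = nbr_measure E w a i"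
      using pc' unfolding coupling_def by auto
    have "transport_cost N (hop_dist E) \<pi> - transport_cost N (hop_dist Es) \<pi>
        = (\<Sum>i\<in>N. \<Sum>j\<in>N. (hop_dist E i j - hop_dist Es i j) * \<pi> i j)"
      unfolding transport_cost_def by (simp add: sum_subtractf[symmetric] left_diff_distrib)
    also have "\<dots> \<le> (\<Sum>i\<in>N. \<Sum>j\<in>N. M * \<pi> i j)"
      by (intro sum_mono mult_right_mono) (use Mge pnn in auto)
    also have "\<dots> = M * (\<Sum>i\<in>N. \<Sum>j\<in>N. \<pi> i j)" by (simp add: sum_distrib_left)
    also have "(\<Sum>i\<in>N. \<Sum>j\<in>N. \<pi> i j) = (\<Sum>i\<in>N. nbr_measure E w a i)"
      using rows by simp
    also have "\<dots> = 1" using ma by simp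
    finally have "W - Ws \<le> M" using WW pe by simp
    then have "(W - Ws) / ds \<le> M / ds" using dds by (intro divide_right_mono) auto
    with key show "ricci N Es ws a b - ricci N E w a b
           \<le> Max {\<bar>hop_dist E u v - hop_dist Es u v\<bar> | u v. u \<in> N \<and> v \<in> N} / hop_dist Es a b"
      unfolding M_def ds_def by simp
  qed
qed

end
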